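(* Under the standing assumptions below, for every nonempty bounded open interval $J\subset\mathbb R$, $$\lambda(J)\le\frac{\pi^2}{\mathcal L(J)^2}\,\frac{1}{\big(⨍_J w\big)^3}\Bigg(⨍_J pw^2+2⨍_J\Big|pw^2-\frac{⨍_J pw^2}{⨍_J w}\,w\Big|\Bigg)+\beta^2,$$ where $⨍_J g=\frac{1}{\mathcal L(J)}\int_J g\,dx$.
   Context: Standing assumptions: $1<\beta<\infty$; $q\in L^\infty(\mathbb R)$ with $0\le q\le\beta$ a.e.; $p,w\in L^\infty(\mathbb R)$ with $1/\beta\le p\le\beta$ and $1/\beta\le w\le\beta$ a.e. For a nonempty bounded open interval $J$, $\lambda(J)=\min_{u\in H^1_0(J),u\ne0}\frac{\int_J p u'^2\,dx+\int_J q u^2\,dx}{\int_J w u^2\,dx}$. $\mathcal L$ denotes Lebesgue measure. *)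

theory Defs
  imports "HOL-Analysis.Analysis"
begin

definition avg :: "real \<Rightarrow> real \<Rightarrow> (real \<Rightarrow> real) \<Rightarrow> real" where
  "avg a b g = (LINT x:{a<..<b}|lebesgue. g x) / (b - a)"

text \<open>Membership in the Sobolev space H^1_0((a,b)), in its one-dimensional description:
  u is the primitive on [a,b] of a square-integrable function g (its weak derivative),
  vanishing at both endpoints.\<close>
definition H10 :: "real \<Rightarrow> real \<Rightarrow> (real \<Rightarrow> real) \<Rightarrow> (real \<Rightarrow> real) \<Rightarrow> bool" where
  "H10 a b u g \<longleftrightarrow>
     g \<in> borel_measurable lebesgue \<and>
     set_integrable lebesgue {a<..<b} (\<lambda>x. (g x)^2) \<and>
     (\<forall>x\<in>{a..b}. u x = (LINT t:{a<..<x}|lebesgue. g t)) \<and>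
     (LINT t:{a<..<b}|lebesgue. g t) = 0"

text \<open>The principal eigenvalue lambda((a,b)) as the infimum (= minimum) of the Rayleigh quotient
  over nonzero elements of H^1_0((a,b)); g is the (weak) derivative u'.\<close>
definition eigval :: "(real \<Rightarrow> real) \<Rightarrow> (real \<Rightarrow> real) \<Rightarrow> (real \<Rightarrow> real) \<Rightarrow> real \<Rightarrow> real \<Rightarrow> real" where
  "eigval p q w a b = Inf
     {((LINT x:{a<..<b}|lebesgue. p x * (g x)^2) + (LINT x:{a<..<b}|lebesgue. q x * (u x)^2))
        / (LINT x:{a<..<b}|lebesgue. w x * (u x)^2)
      | u g. H10 a b u g \<and> (\<exists>x\<in>{a<..<b}. u x \<noteq> 0)}"

end

theory Submission
  imports Defs
begin

lemma bsi:
  fixes f :: "real \<Rightarrow> real"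
  assumes "S \<in> sets lebesgue" "emeasure lebesgue S < \<infinity>" "f \<in> borel_measurable lebesgue"
    "AE x in lebesgue. \<bar>f x\<bar> \<le> B"
  shows "set_integrable lebesgue S f"
  unfolding set_integrable_def
  by (rule integrableI_bounded_set_indicator[where B=B]) (use assms in auto)

lemma bsi_Ioo:
  fixes f :: "real \<Rightarrow> real"
  assumes "f \<in> borel_measurable lebesgue" "AE x in lebesgue. \<bar>f x\<bar> \<le> B"
  shows "set_integrable lebesgue {x<..<y} f"
proof (cases "x \<le> y")
  case True
  then show ?thesis by (intro bsi[OF _ _ assms]) auto
next
  case False
  then show ?thesis by (intro bsi[OF _ _ assms]) auto
qed

lemma AE_leb_pt: "AE x in lebesgue. x \<noteq> (c::real)"
  by (simp add: AE_completion AE_lborel_singleton)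

lemma cont_leb: "continuous_on UNIV (f::real\<Rightarrow>real) \<Longrightarrow> f \<in> borel_measurable lebesgue"
  by (metis measurable_lborel2 borel_measurable_continuous_onI measurable_completion)

lemma id_leb[measurable]: "(\<lambda>x::real. x) \<in> borel_measurable lebesgue"
  by (rule cont_leb) (rule continuous_on_id)

locale wsetup =
  fixes w :: "real \<Rightarrow> real" and \<beta> a :: real
  assumes beta: "1 < \<beta>" and wm[measurable]: "w \<in> borel_measurable lebesgue"
    and wb: "AE x in lebesgue. 1 / \<beta> \<le> w x \<and> w x \<le> \<beta>"
begin

definition W where "W x = (LINT t:{a<..<x}|lebesgue. w t)"

lemma wpos: "AE x in lebesgue. 0 < w x"
proof -
  have h: "0 < 1/\<beta>" using beta by simp
  show ?thesis using wb by (rule eventually_mono) (use h in linarith)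
qed

lemma wabs: "AE x in lebesgue. \<bar>w x\<bar> \<le> \<beta>"
  using wb wpos by eventually_elim auto

lemma int_w: "set_integrable lebesgue {x<..<y} w"
  by (rule bsi_Ioo[OF wm wabs])

lemma int_w_bounds:
  assumes "x \<le> y"
  shows "(y - x) / \<beta> \<le> (LINT t:{x<..<y}|lebesgue. w t)"
    "(LINT t:{x<..<y}|lebesgue. w t) \<le> \<beta> * (y - x)"
proof -
  have c1: "(LINT t:{x<..<y}|lebesgue. 1/\<beta>) = (y - x) / \<beta>"
    using assms by (subst set_integral_const) auto
  have c2: "(LINT t:{x<..<y}|lebesgue. \<beta>) = \<beta> * (y - x)"
    using assms by (subst set_integral_const) auto
  have ci: "set_integrable lebesgue {x<..<y} (\<lambda>_. c)" for c :: real
    by (rule bsi_Ioo[where B="\<bar>c\<bar>"]) auto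
  show "(y - x) / \<beta> \<le> (LINT t:{x<..<y}|lebesgue. w t)"
    unfolding c1[symmetric]
    by (rule set_integral_mono_AE[OF ci int_w]) (use wb in auto)
  show "(LINT t:{x<..<y}|lebesgue. w t) \<le> \<beta> * (y - x)"
    unfolding c2[symmetric]
    by (rule set_integral_mono_AE[OF int_w ci]) (use wb in auto)
qed

lemma ind_w_meas[measurable]: "(\<lambda>x. indicator S x * w x) \<in> borel_measurable lebesgue"
  if "S \<in> sets lebesgue" for S
  using that by measurable

lemma W_split:
  assumes "a \<le> x" "x \<le> y"
  shows "W y = W x + (LINT t:{x<..<y}|lebesgue. w t)"
proof -
  have "W y = (LINT t:{a<..<x} \<union> {x<..<y}|lebesgue. w t)"
    unfolding W_def
    by (rule set_integral_cong_set)
       (use AE_leb_pt[of x] assms in \<open>auto elim!: eventually_mono simp: set_borel_measurable_def intro!: ind_w_meas\<close>)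
  also have "\<dots> = W x + (LINT t:{x<..<y}|lebesgue. w t)"
    unfolding W_def by (rule set_integral_Un[OF _ int_w int_w]) auto
  finally show ?thesis .
qed

lemma W_left: "x \<le> a \<Longrightarrow> W x = 0"
  unfolding W_def by (simp add: set_lebesgue_integral_def)

lemma W_max: "W x = W (max a x)"
  by (cases "x \<le> a") (auto simp: W_left max_def)

lemma W_mono_strict:
  assumes "a \<le> x" "x < y"
  shows "W x < W y"
proof -
  have "0 < (y - x) / \<beta>" using assms beta by simp
  then show ?thesis using W_split[of x y] int_w_bounds[of x y] assms by linarith
qed

lemma W_lip: "\<bar>W y - W x\<bar> \<le> \<beta> * \<bar>y - x\<bar>"
proof -
  have *: "\<bar>W y - W x\<bar> \<le> \<beta> * \<bar>y - x\<bar>" if "x \<le> y" for x y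
  proof -
    have D1: "W y - W x = W (max a y) - W (max a x)" using W_max by metis
    have mm: "max a x \<le> max a y" using that by auto
    have D2: "W y - W x = (LINT t:{max a x<..<max a y}|lebesgue. w t)"
      using W_split[of "max a x" "max a y"] D1 mm by auto
    have D3: "max a y - max a x \<le> y - x" using that by auto
    have l: "0 \<le> (max a y - max a x) / \<beta>" using beta \<open>max a x \<le> max a y\<close> by simp
    have u: "\<beta> * (max a y - max a x) \<le> \<beta> * (y - x)"
      using beta D3 by (intro mult_left_mono) auto
    show ?thesis using int_w_bounds[OF \<open>max a x \<le> max a y\<close>] D2 l u that by linarith
  qed
  show ?thesis
    using *[of x y] *[of y x] by (cases "x \<le> y") (auto simp: abs_minus_commute)
qed

lemma W_cont: "continuous_on UNIV W"
proof (rule continuous_onI)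
  fix x and e :: real assume e: "0 < e"
  show "\<exists>d>0. \<forall>x'\<in>UNIV. dist x' x < d \<longrightarrow> dist (W x') (W x) \<le> e"
  proof (intro exI conjI ballI impI)
    show "0 < e / \<beta>" using beta e by simp
    fix x' assume "dist x' x < e / \<beta>"
    then have "\<beta> * \<bar>x' - x\<bar> \<le> \<beta> * (e / \<beta>)"
      using beta by (intro mult_left_mono) (auto simp: dist_real_def)
    also have "\<dots> = e" using beta by simp
    finally show "dist (W x') (W x) \<le> e" using W_lip[of x' x] by (simp add: dist_real_def)
  qed
qed

lemma W_meas[measurable]: "W \<in> borel_measurable lebesgue"
  using W_cont
  by (metis measurable_lborel2 borel_measurable_continuous_onI measurable_completion)

lemma W_a: "W a = 0" by (simp add: W_left)

lemma W_mono: "a \<le> x \<Longrightarrow> x \<le> y \<Longrightarrow> W x \<le> W y"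
  using W_mono_strict[of x y] by (cases "x = y") auto

lemma W_pos: "a < x \<Longrightarrow> 0 < W x"
  using W_mono_strict[of a x] W_a by simp

lemma W_level:
  assumes "a \<le> c"
  shows "{a<..<b} \<inter> {x. W c < W x} = {a<..<b} \<inter> {c<..}"
proof -
  have "W c < W x \<longleftrightarrow> c < x" if "a < x" for x
    using W_mono_strict[of c x] W_mono[of x c] that assms by (cases "c < x") auto
  then show ?thesis by auto
qed

lemma sets_lev: "{a<..<b} \<inter> {x. s < W x} \<in> sets lebesgue"
proof -
  have "{a<..<b} \<inter> {x. s < W x} = {x\<in>space lebesgue. a < x \<and> x < b \<and> s < W x}" by auto
  also have "\<dots> \<in> sets lebesgue" by measurable
  finally show ?thesis .
qed

definition \<nu> where "\<nu> b = density lebesgue (\<lambda>x. ennreal (indicator {a<..<b} x * w x))"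

lemma sets_\<nu>[simp, measurable_cong]: "sets (\<nu> b) = sets lebesgue"
  by (simp add: \<nu>_def)

lemma emeasure_\<nu>_super:
  assumes "a < b"
  shows "emeasure (distr (\<nu> b) lborel W) {s<..} = ennreal (LINT x:{a<..<b} \<inter> {x. s < W x}|lebesgue. w x)"
proof -
  have Wm: "W \<in> measurable (\<nu> b) lborel"
    by (simp add: measurable_lborel2 cong: measurable_cong_sets)
  have "emeasure (distr (\<nu> b) lborel W) {s<..} = emeasure (\<nu> b) (W -` {s<..} \<inter> space (\<nu> b))"
    by (rule emeasure_distr[OF Wm]) simp
  also have "\<dots> = (\<integral>\<^sup>+ x. ennreal (indicator {a<..<b} x * w x) * indicator (W -` {s<..}) x \<partial>lebesgue)"
  proof -
    have pre: "W -` {s<..} = {x\<in>space lebesgue. s < W x}" by auto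
    have m1: "W -` {s<..} \<in> sets lebesgue" unfolding pre by measurable
    have m2: "(\<lambda>x. ennreal (indicator {a<..<b} x * w x)) \<in> borel_measurable lebesgue"
      by (rule measurable_compose[OF ind_w_meas]) auto
    note ed = emeasure_density[OF m2 m1]
    have sp: "W -` {s<..} \<inter> space (\<nu> b) = W -` {s<..}" by (simp add: \<nu>_def)
    show ?thesis unfolding sp unfolding \<nu>_def by (rule ed)
  qed
  also have "\<dots> = (\<integral>\<^sup>+ x. ennreal (indicator ({a<..<b} \<inter> {x. s < W x}) x * w x) \<partial>lebesgue)"
  proof (intro nn_integral_cong)
    fix x
    show "ennreal (indicator {a<..<b} x * w x) * indicator (W -` {s<..}) x =
          ennreal (indicator ({a<..<b} \<inter> {x. s < W x}) x * w x)"
      by (cases "x \<in> {a<..<b}"; cases "s < W x") (simp_all add: indicator_def)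
  qed
  also have "\<dots> = ennreal (LINT x:{a<..<b} \<inter> {x. s < W x}|lebesgue. w x)"
  proof -
    have "set_integrable lebesgue ({a<..<b} \<inter> {x. s < W x}) w"
      by (rule set_integrable_subset[OF int_w[of a b]]) (auto intro: sets_lev)
    then have i1: "integrable lebesgue (\<lambda>x. indicator ({a<..<b} \<inter> {x. s < W x}) x * w x)"
      by (simp add: set_integrable_def)
    have a1: "AE x in lebesgue. 0 \<le> indicator ({a<..<b} \<inter> {x. s < W x}) x * w x"
      using wpos by (rule eventually_mono) (metis indicator_pos_le less_imp_le mult_nonneg_nonneg)
    show ?thesis
      unfolding set_lebesgue_integral_def real_scaleR_def
      by (rule nn_integral_eq_integral[OF i1 a1])
  qed
  finally show ?thesis .
qed


lemma Wm_nu: "W \<in> measurable (\<nu> b) lborel"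
  by (subst measurable_cong_sets[OF sets_\<nu> sets_lborel]) (rule W_meas)

lemma distr_eq:
  assumes "a < b"
  shows "distr (\<nu> b) lborel W = density lborel (indicator {0<..<W b})"
proof -
  have Mpos: "0 < W b" using W_pos assms by simp
  have key: "emeasure (distr (\<nu> b) lborel W) {s<..} = emeasure lborel ({0<..<W b} \<inter> {s<..})" for s
  proof -
    consider "s \<le> 0" | "W b \<le> s" | "0 < s" "s < W b" by linarith
    then show ?thesis
    proof cases
      case 1
      have E1: "{a<..<b} \<inter> {x. s < W x} = {a<..<b}"
      proof (intro equalityI subsetI)
        fix x assume "x \<in> {a<..<b}"
        then have "0 < W x" using W_pos[of x] by simp
        then show "x \<in> {a<..<b} \<inter> {x. s < W x}" using \<open>x \<in> {a<..<b}\<close> 1 by simp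
      qed simp
      have E2: "{0<..<W b} \<inter> {s<..} = {0<..<W b}" using 1 by auto
      have "emeasure (distr (\<nu> b) lborel W) {s<..} = ennreal (W b)"
        unfolding emeasure_\<nu>_super[OF assms] E1 by (simp only: W_def)
      also have "\<dots> = emeasure lborel ({0<..<W b} \<inter> {s<..})"
        unfolding E2 using Mpos by simp
      finally show ?thesis .
    next
      case 2
      have "{a<..<b} \<inter> {x. s < W x} = {}"
      proof (rule equals0I)
        fix x assume "x \<in> {a<..<b} \<inter> {x. s < W x}"
        then have x: "a < x" "x < b" "s < W x" by auto
        have "W x \<le> W b" using W_mono[of x b] x by simp
        then show False using x 2 by linarith
      qed
      note E1 = this
      have E2: "{0<..<W b} \<inter> {s<..} = {}" using 2 by auto
      show ?thesis
        unfolding emeasure_\<nu>_super[OF assms] E1 E2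
        by (simp add: set_lebesgue_integral_def)
    next
      case 3
      have "\<exists>c. a \<le> c \<and> c \<le> b \<and> W c = s"
      proof (rule IVT')
        show "W a \<le> s" using 3 W_a by simp
        show "s \<le> W b" using 3 by simp
        show "a \<le> b" using assms by simp
        show "continuous_on {a..b} W" by (rule continuous_on_subset[OF W_cont]) simp
      qed
      then obtain c where c: "a \<le> c" "c \<le> b" "W c = s" by blast
      have "{a<..<b} \<inter> {x. s < W x} = {a<..<b} \<inter> {c<..}"
        using W_level[OF c(1), of b] unfolding c(3) .
      also have "\<dots> = {c<..<b}" using c(1) by auto
      finally have E1: "{a<..<b} \<inter> {x. s < W x} = {c<..<b}" .
      have E2: "{0<..<W b} \<inter> {s<..} = {s<..<W b}" using 3 by auto
      have E3: "(LINT t:{c<..<b}|lebesgue. w t) = W b - s"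
        using W_split[OF c(1) c(2)] c(3) by simp
      show ?thesis
        unfolding emeasure_\<nu>_super[OF assms] E1 E2 E3 using 3 by simp
    qed
  qed
  show ?thesis
  proof (rule measure_eqI_lessThan)
    show "sets (distr (\<nu> b) lborel W) = sets borel" by simp
    show "sets (density lborel (indicator {0<..<W b})) = sets borel" by simp
    fix s
    have "emeasure lborel ({0<..<W b} \<inter> {s<..}) \<le> emeasure lborel {0<..<W b}"
      by (rule emeasure_mono) auto
    also have "\<dots> < \<infinity>" using Mpos by simp
    finally show "emeasure (distr (\<nu> b) lborel W) {s<..} < \<infinity>" unfolding key .
    show "emeasure (distr (\<nu> b) lborel W) {s<..} =
          emeasure (density lborel (indicator {0<..<W b})) {s<..}"
      unfolding key by (rule emeasure_restricted[symmetric]) auto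
  qed
qed

lemma SUB:
  assumes "a < b" and f[measurable]: "f \<in> borel_measurable borel"
  shows "(LINT x:{a<..<b}|lebesgue. w x * f (W x)) = (LINT s:{0<..<W b}|lborel. f s)"
proof -
  have fl: "f \<in> borel_measurable lborel" by simp
  have eqd: "density lborel (indicator {0<..<W b}) = density lborel (\<lambda>x. ennreal (indicator {0<..<W b} x))"
    by (simp add: ennreal_indicator)
  have fW: "(\<lambda>x. f (W x)) \<in> borel_measurable lebesgue"
    by (rule measurable_compose[OF W_meas f])
  have "(LINT s:{0<..<W b}|lborel. f s) = integral\<^sup>L (density lborel (\<lambda>x. ennreal (indicator {0<..<W b} x))) f"
    unfolding set_lebesgue_integral_def
    by (subst integral_density[OF fl]) auto
  also have "\<dots> = integral\<^sup>L (distr (\<nu> b) lborel W) f"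
    by (simp add: distr_eq[OF assms(1)] eqd)
  also have "\<dots> = integral\<^sup>L (\<nu> b) (\<lambda>x. f (W x))"
    by (rule integral_distr[OF Wm_nu fl])
  also have "\<dots> = integral\<^sup>L lebesgue (\<lambda>x. (indicator {a<..<b} x * w x) *\<^sub>R f (W x))"
    unfolding \<nu>_def
  proof (rule integral_density[OF fW])
    show "(\<lambda>x. indicator {a<..<b} x * w x) \<in> borel_measurable lebesgue" by (rule ind_w_meas) simp
    show "AE x in lebesgue. 0 \<le> indicator {a<..<b} x * w x"
      using wpos by (rule eventually_mono) (metis indicator_pos_le less_imp_le mult_nonneg_nonneg)
  qed
  also have "\<dots> = (LINT x:{a<..<b}|lebesgue. w x * f (W x))"
    unfolding set_lebesgue_integral_def
    by (intro Bochner_Integration.integral_cong) (simp_all add: indicator_def)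
  finally show ?thesis ..
qed

end

lemma ftc_Ioo:
  fixes f F :: "real \<Rightarrow> real"
  assumes "0 \<le> X" "continuous_on {0..X} f"
    "\<And>x. 0 \<le> x \<Longrightarrow> x \<le> X \<Longrightarrow> (F has_real_derivative f x) (at x within {0..X})"
  shows "(LINT s:{0<..<X}|lborel. f s) = F X - F 0"
proof -
  have mm: "min 0 X = 0" "max 0 X = X" using assms(1) by auto
  have "(LBINT s=ereal 0..ereal X. f s) = F X - F 0"
  proof (rule interval_integral_FTC_finite)
    show "continuous_on {min 0 X..max 0 X} f" unfolding mm by (rule assms(2))
    fix x assume "min 0 X \<le> x" "x \<le> max 0 X"
    then show "(F has_vector_derivative f x) (at x within {min 0 X..max 0 X})"
      unfolding mm has_real_derivative_iff_has_vector_derivative[symmetric]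
      by (rule assms(3))
  qed
  moreover have "(LBINT s=ereal 0..ereal X. f s) = (LINT s:{0<..<X}|lborel. f s)"
    using assms(1) unfolding interval_lebesgue_integral_def by simp
  ultimately show ?thesis by simp
qed


context wsetup
begin

lemma int_cos:
  assumes "a < x" "M \<noteq> 0"
  shows "(LINT t:{a<..<x}|lebesgue. w t * (pi / M * cos (pi * W t / M))) = sin (pi * W x / M)"
proof -
  have "(LINT t:{a<..<x}|lebesgue. w t * (pi / M * cos (pi * W t / M)))
        = (LINT s:{0<..<W x}|lborel. pi / M * cos (pi * s / M))"
    by (rule SUB[OF assms(1)]) measurable
  also have "\<dots> = sin (pi * W x / M) - sin (pi * 0 / M)"
  proof (rule ftc_Ioo)
    show "0 \<le> W x" using W_pos[OF assms(1)] by simp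
    show "continuous_on {0..W x} (\<lambda>s. pi / M * cos (pi * s / M))"
      using assms(2) by (intro continuous_intros) auto
    fix s
    show "((\<lambda>s. sin (pi * s / M)) has_real_derivative pi / M * cos (pi * s / M)) (at s within {0..W x})"
      using assms(2) by (auto intro!: derivative_eq_intros simp: field_simps)
  qed
  finally show ?thesis by simp
qed

lemma int_sin2:
  assumes "a < b"
  shows "(LINT t:{a<..<b}|lebesgue. w t * (sin (pi * W t / W b))^2) = W b / 2"
proof -
  define M where "M = W b"
  have M: "0 < M" using W_pos[OF assms] by (simp add: M_def)
  have "(LINT t:{a<..<b}|lebesgue. w t * (sin (pi * W t / M))^2)
        = (LINT s:{0<..<M}|lborel. (sin (pi * s / M))^2)"
    unfolding M_def by (rule SUB[OF assms(1)]) measurable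
  also have "\<dots> = (M / 2 - M / (4 * pi) * sin (2 * pi * M / M)) - (0 / 2 - M / (4 * pi) * sin (2 * pi * 0 / M))"
  proof (rule ftc_Ioo)
    show "0 \<le> M" using M by simp
    show "continuous_on {0..M} (\<lambda>s. (sin (pi * s / M))^2)"
      using M by (intro continuous_intros) auto
    fix s
    have "1 / 2 - M / (4 * pi) * (cos (2 * pi * s / M) * (2 * pi / M)) = (sin (pi * s / M))^2"
    proof -
      have "cos (2 * pi * s / M) = 1 - 2 * (sin (pi * s / M))^2"
        using cos_double_sin[of "pi * s / M"] by (simp add: mult.assoc)
      then show ?thesis using M by (simp add: field_simps)
    qed
    then show "((\<lambda>s. s / 2 - M / (4 * pi) * sin (2 * pi * s / M)) has_real_derivative (sin (pi * s / M))^2) (at s within {0..M})"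
      by (auto intro!: derivative_eq_intros)
  qed
  also have "\<dots> = M / 2" using M by simp
  finally show ?thesis unfolding M_def .
qed

lemma int_cos2:
  assumes "a < b"
  shows "(LINT t:{a<..<b}|lebesgue. w t * (cos (pi * W t / W b))^2) = W b / 2"
proof -
  define M where "M = W b"
  have M: "0 < M" using W_pos[OF assms] by (simp add: M_def)
  have "(LINT t:{a<..<b}|lebesgue. w t * (cos (pi * W t / M))^2)
        = (LINT s:{0<..<M}|lborel. (cos (pi * s / M))^2)"
    unfolding M_def by (rule SUB[OF assms(1)]) measurable
  also have "\<dots> = (M / 2 + M / (4 * pi) * sin (2 * pi * M / M)) - (0 / 2 + M / (4 * pi) * sin (2 * pi * 0 / M))"
  proof (rule ftc_Ioo)
    show "0 \<le> M" using M by simp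
    show "continuous_on {0..M} (\<lambda>s. (cos (pi * s / M))^2)"
      using M by (intro continuous_intros) auto
    fix s
    have "1 / 2 + M / (4 * pi) * (cos (2 * pi * s / M) * (2 * pi / M)) = (cos (pi * s / M))^2"
    proof -
      have "cos (2 * pi * s / M) = 2 * (cos (pi * s / M))^2 - 1"
        using cos_double_cos[of "pi * s / M"] by (simp add: mult.assoc)
      then show ?thesis using M by (simp add: field_simps)
    qed
    then show "((\<lambda>s. s / 2 + M / (4 * pi) * sin (2 * pi * s / M)) has_real_derivative (cos (pi * s / M))^2) (at s within {0..M})"
      by (auto intro!: derivative_eq_intros)
  qed
  also have "\<dots> = M / 2" using M by simp
  finally show ?thesis unfolding M_def .
qed

end


lemma cos_bound_aux:
  fixes X Y t :: real
  assumes "0 \<le> t" "t \<le> 1"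
  shows "X * t \<le> Y * t + \<bar>X - Y\<bar>"
proof -
  have "(X - Y) * t \<le> \<bar>X - Y\<bar> * t" using assms by (intro mult_right_mono) auto
  also have "\<dots> \<le> \<bar>X - Y\<bar>" using assms by (simp add: mult_left_le)
  finally show ?thesis by (simp add: algebra_simps)
qed

theorem mainTheorem4:
  fixes p q w :: "real \<Rightarrow> real" and \<beta> a b :: real
  assumes "1 < \<beta>"
    and "p \<in> borel_measurable lebesgue" "q \<in> borel_measurable lebesgue" "w \<in> borel_measurable lebesgue"
    and "AE x in lebesgue. 0 \<le> q x \<and> q x \<le> \<beta>"
    and "AE x in lebesgue. 1 / \<beta> \<le> p x \<and> p x \<le> \<beta>"
    and "AE x in lebesgue. 1 / \<beta> \<le> w x \<and> w x \<le> \<beta>"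
    and "a < b"
  shows "eigval p q w a b \<le>
           pi^2 / (b - a)^2 * (1 / (avg a b w)^3) *
           (avg a b (\<lambda>x. p x * (w x)^2)
            + 2 * avg a b (\<lambda>x. \<bar>p x * (w x)^2 - avg a b (\<lambda>y. p y * (w y)^2) / avg a b w * w x\<bar>))
           + \<beta>^2"
proof -
  note [measurable] = assms(2,3,4)
  interpret W: wsetup w \<beta> a
    by unfold_locales (use assms in auto)
  have ab: "a < b" by (rule assms(8))
  have beta0: "0 < \<beta>" using assms(1) by simp
  define M where "M = W.W b"
  define L where "L = b - a"
  have M: "0 < M" unfolding M_def by (rule W.W_pos[OF ab])
  have L: "0 < L" unfolding L_def using ab by simp
  have Wm[measurable]: "W.W \<in> borel_measurable lebesgue" by (rule W.W_meas)
  define Aw where "Aw = avg a b w"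
  have AwM: "M = Aw * L" unfolding Aw_def avg_def M_def W.W_def L_def using ab by simp
  have Aw: "0 < Aw" using AwM M L by (simp add: zero_less_mult_iff)
  define A1 where "A1 = avg a b (\<lambda>x. p x * (w x)^2)"
  define C where "C = A1 / Aw"
  define h where "h = (\<lambda>x. \<bar>p x * (w x)^2 - C * w x\<bar>)"
  define A2 where "A2 = avg a b h"
  have RHS: "pi^2 / (b - a)^2 * (1 / (avg a b w)^3) *
           (avg a b (\<lambda>x. p x * (w x)^2)
            + 2 * avg a b (\<lambda>x. \<bar>p x * (w x)^2 - avg a b (\<lambda>y. p y * (w y)^2) / avg a b w * w x\<bar>))
           + \<beta>^2 = pi^2 / L^2 * (1 / Aw^3) * (A1 + 2 * A2) + \<beta>^2"
    unfolding A2_def h_def C_def A1_def Aw_def L_def ..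
  define u where "u = (\<lambda>x. sin (pi * W.W x / M))"
  define g where "g = (\<lambda>x. pi / M * w x * cos (pi * W.W x / M))"
  have pAE: "AE x in lebesgue. 0 < p x \<and> p x \<le> \<beta>"
  proof -
    have h0: "0 < 1/\<beta>" using beta0 by simp
    show ?thesis using assms(6) by (rule eventually_mono) (use h0 in linarith)
  qed
  have wAE: "AE x in lebesgue. 0 < w x \<and> 1 / \<beta> \<le> w x \<and> w x \<le> \<beta>"
    using assms(7) W.wpos by eventually_elim auto
  have gsplit: "g x = w x * (pi / M * cos (pi * W.W x / M))" for x
    unfolding g_def by simp
  have u_int: "u x = (LINT t:{a<..<x}|lebesgue. g t)" if "x \<in> {a..b}" for x
  proof (cases "x = a")
    case True
    then show ?thesis unfolding u_def by (simp add: W.W_a set_lebesgue_integral_def)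
  next
    case False
    then have "a < x" using that by simp
    then show ?thesis unfolding u_def gsplit using W.int_cos[of x M] M by simp
  qed
  have g_int0: "(LINT t:{a<..<b}|lebesgue. g t) = 0"
  proof -
    have "sin (pi * W.W b / M) = (LINT t:{a<..<b}|lebesgue. g t)"
      using u_int[of b] ab unfolding u_def by simp
    moreover have "pi * W.W b / M = pi" using M unfolding M_def by simp
    ultimately show ?thesis by simp
  qed
  have D: "(LINT x:{a<..<b}|lebesgue. w x * (u x)^2) = M / 2"
    unfolding u_def M_def by (rule W.int_sin2[OF ab])
  have C2: "(LINT x:{a<..<b}|lebesgue. w x * (cos (pi * W.W x / M))^2) = M / 2"
    unfolding M_def by (rule W.int_cos2[OF ab])
  have gm[measurable]: "g \<in> borel_measurable lebesgue" unfolding g_def by measurable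
  have um[measurable]: "u \<in> borel_measurable lebesgue" unfolding u_def by measurable
  have H: "H10 a b u g"
    unfolding H10_def
  proof (intro conjI ballI)
    show "g \<in> borel_measurable lebesgue" by (rule gm)
    show "set_integrable lebesgue {a<..<b} (\<lambda>x. (g x)^2)"
    proof (rule bsi_Ioo[where B="(pi / M * \<beta>)^2"])
      show "(\<lambda>x. (g x)^2) \<in> borel_measurable lebesgue" by measurable
      show "AE x in lebesgue. \<bar>(g x)^2\<bar> \<le> (pi / M * \<beta>)^2"
        using wAE
      proof (rule eventually_mono)
        fix x assume x: "0 < w x \<and> 1 / \<beta> \<le> w x \<and> w x \<le> \<beta>"
        have "\<bar>g x\<bar> = pi / M * w x * \<bar>cos (pi * W.W x / M)\<bar>"
          unfolding g_def using x M by (simp add: abs_mult)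
        also have "\<dots> \<le> pi / M * \<beta> * 1"
          using x M by (intro mult_mono) auto
        finally have "\<bar>g x\<bar> \<le> pi / M * \<beta>" by simp
        then have "\<bar>g x\<bar>^2 \<le> (pi / M * \<beta>)^2" by (intro power_mono) auto
        then show "\<bar>(g x)^2\<bar> \<le> (pi / M * \<beta>)^2" by simp
      qed
    qed
    show "u x = (LINT t:{a<..<x}|lebesgue. g t)" if "x \<in> {a..b}" for x
      using u_int that by blast
    show "(LINT t:{a<..<b}|lebesgue. g t) = 0" by (rule g_int0)
  qed
  have nz: "\<exists>x\<in>{a<..<b}. u x \<noteq> 0"
  proof (rule ccontr)
    assume "\<not> ?thesis"
    then have "\<forall>x\<in>{a<..<b}. u x = 0" by blast
    then have z: "indicator {a<..<b} x *\<^sub>R (w x * (u x)^2) = 0" for x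
      by (auto simp: indicator_def)
    have "(LINT x:{a<..<b}|lebesgue. w x * (u x)^2) = 0"
      unfolding set_lebesgue_integral_def z by simp
    then show False using D M by simp
  qed
  define N1 where "N1 = (LINT x:{a<..<b}|lebesgue. p x * (g x)^2)"
  define N2 where "N2 = (LINT x:{a<..<b}|lebesgue. q x * (u x)^2)"
  define Q where "Q = (N1 + N2) / (LINT x:{a<..<b}|lebesgue. w x * (u x)^2)"
  let ?S = "{((LINT x:{a<..<b}|lebesgue. p x * (g x)^2) + (LINT x:{a<..<b}|lebesgue. q x * (u x)^2))
        / (LINT x:{a<..<b}|lebesgue. w x * (u x)^2)
      | u g. H10 a b u g \<and> (\<exists>x\<in>{a<..<b}. u x \<noteq> 0)}"
  have Qin: "Q \<in> ?S" unfolding Q_def N1_def N2_def using H nz by blast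
  have bdd: "bdd_below ?S"
  proof (rule bdd_belowI)
    fix y assume "y \<in> ?S"
    then obtain u' g' where y: "y = ((LINT x:{a<..<b}|lebesgue. p x * (g' x)^2) + (LINT x:{a<..<b}|lebesgue. q x * (u' x)^2))
        / (LINT x:{a<..<b}|lebesgue. w x * (u' x)^2)" by blast
    have i1: "0 \<le> (LINT x:{a<..<b}|lebesgue. p x * (g' x)^2)"
      unfolding set_lebesgue_integral_def
      by (rule integral_nonneg_AE) (use pAE in \<open>auto elim!: eventually_mono split: split_indicator\<close>)
    have i2: "0 \<le> (LINT x:{a<..<b}|lebesgue. q x * (u' x)^2)"
      unfolding set_lebesgue_integral_def
      by (rule integral_nonneg_AE) (use assms(5) in \<open>auto elim!: eventually_mono split: split_indicator\<close>)
    have i3: "0 \<le> (LINT x:{a<..<b}|lebesgue. w x * (u' x)^2)"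
      unfolding set_lebesgue_integral_def
      by (rule integral_nonneg_AE) (use wAE in \<open>auto elim!: eventually_mono split: split_indicator\<close>)
    show "0 \<le> y" unfolding y using i1 i2 i3 by simp
  qed
  have "eigval p q w a b \<le> Q"
    unfolding eigval_def by (rule cInf_lower[OF Qin bdd])
  also have "Q \<le> pi^2 / L^2 * (1 / Aw^3) * (A1 + 2 * A2) + \<beta>^2"
  proof -
    define cs where "cs = (\<lambda>x. (cos (pi * W.W x / M))^2)"
    have csm[measurable]: "cs \<in> borel_measurable lebesgue" unfolding cs_def by measurable
    have cs01: "0 \<le> cs x" "cs x \<le> 1" for x
      unfolding cs_def by (auto simp: abs_square_le_1)
    have hm[measurable]: "h \<in> borel_measurable lebesgue" unfolding h_def by measurable
    have N1eq: "N1 = (pi / M)^2 * (LINT x:{a<..<b}|lebesgue. p x * (w x)^2 * cs x)"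
    proof -
      have "(\<lambda>x. p x * (g x)^2) = (\<lambda>x. (pi / M)^2 * (p x * (w x)^2 * cs x))"
        by (rule ext) (simp add: g_def cs_def power_mult_distrib power_divide)
      then show ?thesis unfolding N1_def by simp
    qed
    have bF1: "AE x in lebesgue. \<bar>p x * (w x)^2 * cs x\<bar> \<le> \<beta> * \<beta>^2"
      using pAE wAE
    proof eventually_elim
      case (elim x)
      have "p x * (w x)^2 * cs x \<le> p x * (w x)^2 * 1"
        using elim cs01[of x] by (intro mult_left_mono) auto
      also have "\<dots> \<le> \<beta> * \<beta>^2"
        using elim by (auto intro!: mult_mono power_mono)
      finally show ?case using elim cs01[of x] by simp
    qed
    have iF1: "set_integrable lebesgue {a<..<b} (\<lambda>x. p x * (w x)^2 * cs x)"
      by (rule bsi_Ioo[OF _ bF1]) measurable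
    have bF2: "AE x in lebesgue. \<bar>C * (w x * cs x)\<bar> \<le> \<bar>C\<bar> * \<beta>"
      using wAE
    proof eventually_elim
      case (elim x)
      have "\<bar>w x * cs x\<bar> \<le> \<beta>"
        using elim cs01[of x] mult_mono[of "w x" \<beta> "cs x" 1] by simp
      then show ?case by (simp add: abs_mult mult_left_mono)
    qed
    have iF2: "set_integrable lebesgue {a<..<b} (\<lambda>x. C * (w x * cs x))"
      by (rule bsi_Ioo[OF _ bF2]) measurable
    have bh: "AE x in lebesgue. \<bar>h x\<bar> \<le> \<beta> * \<beta>^2 + \<bar>C\<bar> * \<beta>"
      using pAE wAE
    proof eventually_elim
      case (elim x)
      have "p x * (w x)^2 \<le> \<beta> * \<beta>^2"
        using elim by (auto intro!: mult_mono power_mono)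
      moreover have "\<bar>C * w x\<bar> \<le> \<bar>C\<bar> * \<beta>"
        using elim by (simp add: abs_mult mult_left_mono)
      moreover have "0 \<le> p x * (w x)^2" using elim by simp
      ultimately show ?case unfolding h_def by linarith
    qed
    have ih: "set_integrable lebesgue {a<..<b} h"
      by (rule bsi_Ioo[OF hm bh])
    have Lh: "(LINT x:{a<..<b}|lebesgue. h x) = A2 * L"
      unfolding A2_def avg_def L_def using ab by simp
    have "(LINT x:{a<..<b}|lebesgue. p x * (w x)^2 * cs x)
          \<le> (LINT x:{a<..<b}|lebesgue. C * (w x * cs x) + h x)"
    proof (rule set_integral_mono[OF iF1 set_integral_add(1)[OF iF2 ih]])
      fix x
      show "p x * (w x)^2 * cs x \<le> C * (w x * cs x) + h x"
        using cos_bound_aux[OF cs01(1)[of x] cs01(2)[of x], of "p x * (w x)^2" "C * w x"]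
        unfolding h_def by (simp add: algebra_simps)
    qed
    also have "\<dots> = C * (M / 2) + A2 * L"
      unfolding set_integral_add(2)[OF iF2 ih] Lh
      using C2 by (simp add: cs_def)
    finally have N1le: "N1 \<le> (pi / M)^2 * (C * (M / 2) + A2 * L)"
      unfolding N1eq by (intro mult_left_mono) auto
    have bq: "AE x in lebesgue. \<bar>q x * (u x)^2\<bar> \<le> \<beta>"
      using assms(5)
    proof (rule eventually_mono)
      fix x assume x: "0 \<le> q x \<and> q x \<le> \<beta>"
      have "(u x)^2 \<le> 1" unfolding u_def by (simp add: abs_square_le_1)
      then have "q x * (u x)^2 \<le> \<beta> * 1" using x by (intro mult_mono) auto
      then show "\<bar>q x * (u x)^2\<bar> \<le> \<beta>" using x by simp
    qed
    have iq: "set_integrable lebesgue {a<..<b} (\<lambda>x. q x * (u x)^2)"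
      by (rule bsi_Ioo[OF _ bq]) measurable
    have bwu: "AE x in lebesgue. \<bar>\<beta>^2 * (w x * (u x)^2)\<bar> \<le> \<beta>^2 * \<beta>"
      using wAE
    proof (rule eventually_mono)
      fix x assume x: "0 < w x \<and> 1 / \<beta> \<le> w x \<and> w x \<le> \<beta>"
      have "(u x)^2 \<le> 1" unfolding u_def by (simp add: abs_square_le_1)
      then have "w x * (u x)^2 \<le> \<beta> * 1" using x by (intro mult_mono) auto
      then show "\<bar>\<beta>^2 * (w x * (u x)^2)\<bar> \<le> \<beta>^2 * \<beta>"
        using x by (simp add: abs_mult mult_left_mono)
    qed
    have iwu: "set_integrable lebesgue {a<..<b} (\<lambda>x. \<beta>^2 * (w x * (u x)^2))"
      by (rule bsi_Ioo[OF _ bwu]) measurable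
    have "N2 \<le> (LINT x:{a<..<b}|lebesgue. \<beta>^2 * (w x * (u x)^2))"
      unfolding N2_def
    proof (rule set_integral_mono_AE[OF iq iwu])
      show "AE x\<in>{a<..<b} in lebesgue. q x * (u x)^2 \<le> \<beta>^2 * (w x * (u x)^2)"
        using assms(5) wAE
      proof eventually_elim
        case (elim x)
        have "\<beta> = \<beta>^2 * (1 / \<beta>)" using beta0 by (simp add: power2_eq_square)
        also have "\<dots> \<le> \<beta>^2 * w x" using elim by (intro mult_left_mono) auto
        finally have "q x \<le> \<beta>^2 * w x" using elim by linarith
        then have "q x * (u x)^2 \<le> \<beta>^2 * w x * (u x)^2" by (intro mult_right_mono) auto
        then show ?case by (simp add: mult.assoc)
      qed
    qed
    also have "\<dots> = \<beta>^2 * (M / 2)" using D by simp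
    finally have N2le: "N2 \<le> \<beta>^2 * (M / 2)" .
    have "Q = (N1 + N2) / (M / 2)" unfolding Q_def D ..
    also have "\<dots> \<le> ((pi / M)^2 * (C * (M / 2) + A2 * L) + \<beta>^2 * (M / 2)) / (M / 2)"
      using N1le N2le M by (intro divide_right_mono) auto
    also have "\<dots> = pi^2 / L^2 * (1 / Aw^3) * (A1 + 2 * A2) + \<beta>^2"
      unfolding C_def AwM using Aw L by (simp add: field_simps power2_eq_square power3_eq_cube)
    finally show ?thesis .
  qed
  finally show ?thesis unfolding RHS .
qed

end
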